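(* Let $d\in\mathbb{N}$, $r\in\mathbb{N}$ with $r\ge2$, set $\delta=r^{-7/2}$, $\sigma=\sqrt{\log(1/\delta)}/r$, $\gamma=\sqrt{\tfrac52\log r}$, $R=1+\gamma(2+\sqrt2)\sqrt d\,\sigma$, $b=(R+1)^2/(4\sigma^2)$, and let $\mathcal K_r$ and $\mathcal K_G^{\sigma,R}$ be as in the context. For any $k\in\mathbb{N}$, \[ \|\mathcal K_rT_k-\mathcal K_G^{\sigma,R}T_k\|_\infty\le 2R\,\frac{3\delta}{\sqrt{2\pi}\sigma}\max_{y\in[-R,R]}|T_k(y)|. \] In particular, if $R\le1+\frac{1}{10k^2}$, then $\|\mathcal K_rT_k-\mathcal K_G^{\sigma,R}T_k\|_\infty\le\frac{24\delta}{\sqrt{2\pi}\sigma}$.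
   Context: $T_k(x)=\cos(k\arccos x)$ (extended as a polynomial to $\mathbb{R}$). $\|g\|_\infty=\sup_{x\in[-1,1]}|g(x)|$. $s_{b,\delta}$ is a univariate polynomial of degree $\lceil\sqrt{2\theta\log(4/\delta)}\rceil$, $\theta=\lceil\max\{\tfrac12be^2,\log(2/\delta)\}\rceil$, with $|e^{-t}-s_{b,\delta}(t)|\le\delta$ for all $t\in[0,b]$. $K_r(x,y)=\frac1{\sqrt{2\pi}\sigma}s_{b,\delta}^2\!\left(\frac{(x-y)^2}{4\sigma^2}\right)$, $\mathcal K_r(f)(x)=\int_{-R}^RK_r(x,y)f(y)\,dy$. The Gaussian kernel is $K_G^\sigma(x,y)=\frac1{\sqrt{2\pi}\sigma}\exp\!\left(-\frac{(x-y)^2}{2\sigma^2}\right)$ and the truncated Gauss–Weierstrass operator is $\mathcal K_G^{\sigma,R}(f)(x)=\int_{-R}^RK_G^\sigma(x,y)f(y)\,dy$. $\log$ is the natural logarithm. *)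

theory Defs
  imports "HOL-Analysis.Analysis" "HOL-Computational_Algebra.Polynomial"
begin

definition cheb_poly :: "nat \<Rightarrow> real poly" where
  "cheb_poly k = (THE p. \<forall>x\<in>{-1..1}. poly p x = cos (real k * arccos x))"

definition cheb :: "nat \<Rightarrow> real \<Rightarrow> real" where
  "cheb k x = poly (cheb_poly k) x"

definition sup_norm :: "(real \<Rightarrow> real) \<Rightarrow> real" where
  "sup_norm g = Sup ((\<lambda>x. \<bar>g x\<bar>) ` {-1..1})"

definition Kr :: "real poly \<Rightarrow> real \<Rightarrow> real \<Rightarrow> real \<Rightarrow> real" where
  "Kr s \<sigma> x y = 1 / (sqrt (2 * pi) * \<sigma>) * (poly s ((x - y)^2 / (4 * \<sigma>^2)))^2"

definition Kr_op :: "real poly \<Rightarrow> real \<Rightarrow> real \<Rightarrow> (real \<Rightarrow> real) \<Rightarrow> real \<Rightarrow> real" where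
  "Kr_op s \<sigma> R f x = integral {-R..R} (\<lambda>y. Kr s \<sigma> x y * f y)"

definition KG :: "real \<Rightarrow> real \<Rightarrow> real \<Rightarrow> real" where
  "KG \<sigma> x y = 1 / (sqrt (2 * pi) * \<sigma>) * exp (- ((x - y)^2) / (2 * \<sigma>^2))"

definition KG_op :: "real \<Rightarrow> real \<Rightarrow> (real \<Rightarrow> real) \<Rightarrow> real \<Rightarrow> real" where
  "KG_op \<sigma> R f x = integral {-R..R} (\<lambda>y. KG \<sigma> x y * f y)"

end

theory Submission
  imports Defs
begin

fun Tp :: "nat \<Rightarrow> real poly" where
  "Tp 0 = 1"
| "Tp (Suc 0) = [:0, 1:]"
| "Tp (Suc (Suc n)) = [:0, 2:] * Tp (Suc n) - Tp n"

lemma Tp_cos: "poly (Tp n) (cos t) = cos (real n * t)"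
proof (induction n rule: Tp.induct)
  case 1 then show ?case by simp
next
  case 2 then show ?case by simp
next
  case (3 n)
  have "cos (real (Suc (Suc n)) * t) = cos ((real (Suc n)) * t + t)"
    by (simp add: algebra_simps)
  moreover have "cos (real n * t) = cos ((real (Suc n)) * t - t)"
    by (simp add: algebra_simps)
  ultimately have "cos (real (Suc (Suc n)) * t) = 2 * cos t * cos (real (Suc n) * t) - cos (real n * t)"
    by (simp add: cos_add cos_diff)
  then show ?case using 3 by simp
qed

lemma cheb_poly_eq: "cheb_poly k = Tp k"
  unfolding cheb_poly_def
proof (rule the_equality)
  show "\<forall>x\<in>{-1..1}. poly (Tp k) x = cos (real k * arccos x)"
  proof
    fix x :: real assume "x \<in> {-1..1}"
    then have "cos (arccos x) = x" by (simp add: cos_arccos)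
    then show "poly (Tp k) x = cos (real k * arccos x)" using Tp_cos[of k "arccos x"] by simp
  qed
next
  fix p assume h: "\<forall>x\<in>{-1..1}. poly p x = cos (real k * arccos x)"
  have "{-1..1::real} \<subseteq> {x. poly (p - Tp k) x = 0}"
  proof
    fix x :: real assume x: "x \<in> {-1..1}"
    then have "cos (arccos x) = x" by (simp add: cos_arccos)
    then show "x \<in> {x. poly (p - Tp k) x = 0}" using h x Tp_cos[of k "arccos x"] by simp
  qed
  moreover have "\<not> finite {-1..1::real}" by simp
  ultimately have "p - Tp k = 0" using poly_roots_finite finite_subset by blast
  then show "p = Tp k" by simp
qed

lemma Tp_closed:
  fixes x w :: real assumes "w^2 = x^2 - 1"
  shows "poly (Tp n) x = ((x + w)^n + (x - w)^n) / 2"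
proof (induction n rule: Tp.induct)
  case 1 then show ?case by simp
next
  case 2 then show ?case by simp
next
  case (3 n)
  have a: "(x+w)^2 = 2*x*(x+w) - 1" "(x-w)^2 = 2*x*(x-w) - 1"
    using assms by (simp_all add: power2_eq_square algebra_simps)
  have "(x+w)^(Suc (Suc n)) = (x+w)^n * (x+w)^2" "(x-w)^(Suc (Suc n)) = (x-w)^n * (x-w)^2"
    by (simp_all add: power2_eq_square algebra_simps)
  then have "(x+w)^(Suc (Suc n)) = (x+w)^n * (2*x*(x+w) - 1)"
     "(x-w)^(Suc (Suc n)) = (x-w)^n * (2*x*(x-w) - 1)"
    using a by simp_all
  then have b: "(x+w)^(Suc (Suc n)) = 2*x*(x+w)^(Suc n) - (x+w)^n"
     "(x-w)^(Suc (Suc n)) = 2*x*(x-w)^(Suc n) - (x-w)^n"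
    by (simp_all add: algebra_simps)
  have "poly (Tp (Suc (Suc n))) x = 2 * x * poly (Tp (Suc n)) x - poly (Tp n) x" by simp
  also have "\<dots> = 2 * x * (((x + w)^(Suc n) + (x - w)^(Suc n)) / 2) - ((x + w)^n + (x - w)^n) / 2"
    by (simp only: 3)
  also have "\<dots> = ((x + w)^(Suc (Suc n)) + (x - w)^(Suc (Suc n))) / 2"
    unfolding b by (simp add: field_simps)
  finally show ?case .
qed

lemma Tp_bound_small: "\<bar>x\<bar> \<le> 1 \<Longrightarrow> \<bar>poly (Tp n) x\<bar> \<le> 1"
  using Tp_cos[of n "arccos x"] by (simp add: cos_arccos)

lemma Tp_bound_big:
  fixes x :: real assumes "1 \<le> \<bar>x\<bar>"
  shows "\<bar>poly (Tp n) x\<bar> \<le> (\<bar>x\<bar> + sqrt (x^2 - 1))^n"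
proof -
  define w where "w = sqrt (x^2 - 1)"
  have "1^2 \<le> \<bar>x\<bar>^2" using power_mono[OF assms, of 2] by simp
  then have w0: "w \<ge> 0" by (simp add: w_def)
  then have "w^2 = x^2 - 1" unfolding w_def by simp
  then have "\<bar>poly (Tp n) x\<bar> = \<bar>(x + w)^n + (x - w)^n\<bar> / 2" by (simp add: Tp_closed)
  also have "\<dots> \<le> (\<bar>x + w\<bar>^n + \<bar>x - w\<bar>^n) / 2"
    by (metis abs_triangle_ineq divide_right_mono power_abs zero_le_numeral)
  also have "\<dots> \<le> ((\<bar>x\<bar>+w)^n + (\<bar>x\<bar>+w)^n) / 2"
    using w0 by (intro divide_right_mono add_mono power_mono) auto
  finally show ?thesis by (simp add: w_def)
qed

lemma Tp_bound3:
  fixes x :: real assumes "\<bar>x\<bar> \<le> 1 + 1 / (10 * real k ^ 2)"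
  shows "\<bar>poly (Tp k) x\<bar> \<le> 3"
proof (cases "\<bar>x\<bar> \<le> 1")
  case True then show ?thesis using Tp_bound_small[of x k] by simp
next
  case False
  then have k: "k \<ge> 1" using assms by (cases k) auto
  define u where "u = 1 / real k"
  have u: "0 < u" "u \<le> 1" using k by (auto simp: u_def)
  have uu: "u^2 \<le> u" using u by (simp add: power2_eq_square mult_le_cancel_left1)
  have eu: "1 / (10 * real k ^ 2) = u^2 / 10" by (simp add: u_def power2_eq_square)
  define e where "e = u^2 / 10"
  have e0: "0 \<le> e" "e \<le> u / 10" using uu by (auto simp: e_def)
  have xe: "\<bar>x\<bar> \<le> 1 + e" using assms eu e_def by simp
  have "x^2 = \<bar>x\<bar>^2" by simp
  also have "\<dots> \<le> (1 + e)^2" using xe by (intro power_mono) auto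
  finally have "x^2 - 1 \<le> e * (2 + e)" by (simp add: power2_eq_square algebra_simps)
  also have "\<dots> \<le> (u^2/10) * (21/10)" using e0 u by (intro mult_mono) (auto simp: e_def)
  also have "\<dots> \<le> (6/10 * u)^2" by (simp add: power2_eq_square)
  finally have "sqrt (x^2 - 1) \<le> sqrt ((6/10 * u)^2)" by (rule real_sqrt_le_mono)
  also have "\<dots> = 6/10 * u" using u by simp
  finally have "\<bar>x\<bar> + sqrt (x^2 - 1) \<le> 1 + u" using xe e0 by linarith
  moreover have "1^2 \<le> \<bar>x\<bar>^2" using False by (intro power_mono) auto
  then have "0 \<le> sqrt (x^2 - 1)" by simp
  ultimately have "(\<bar>x\<bar> + sqrt (x^2 - 1))^k \<le> (1 + u)^k"
    by (intro power_mono) auto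
  also have "\<dots> \<le> exp u ^ k"
    using u by (intro power_mono) (auto simp: exp_ge_add_one_self add.commute)
  also have "\<dots> = exp 1" using k by (simp add: u_def exp_of_nat_mult[symmetric])
  also have "\<dots> \<le> 3" by (rule exp_le)
  finally show ?thesis using Tp_bound_big[of x k] False by simp
qed

lemma cheb_bound3:
  fixes x :: real assumes "\<bar>x\<bar> \<le> 1 + 1 / (10 * real k ^ 2)"
  shows "\<bar>cheb k x\<bar> \<le> 3"
  using Tp_bound3[OF assms] by (simp add: cheb_def cheb_poly_eq)

lemma kern_pt:
  fixes t b \<delta> :: real
  assumes "0 \<le> t" "t \<le> b" "\<forall>t\<in>{0..b}. \<bar>exp (- t) - poly s t\<bar> \<le> \<delta>" "\<delta> \<le> 1"
  shows "\<bar>(poly s t)^2 - exp (- t)^2\<bar> \<le> 3 * \<delta>"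
proof -
  define p where "p = poly s t"
  define e where "e = exp (- t)"
  have e: "0 < e" "e \<le> 1" using assms(1) by (auto simp: e_def)
  have pe: "\<bar>p - e\<bar> \<le> \<delta>" using assms(1,2) assms(3)[rule_format, of t]
    unfolding p_def e_def by (auto simp: abs_minus_commute)
  have "\<bar>p + e\<bar> \<le> 3" using pe e assms(4) by linarith
  have "\<bar>p^2 - e^2\<bar> = \<bar>p - e\<bar> * \<bar>p + e\<bar>"
    by (simp add: power2_eq_square algebra_simps abs_mult[symmetric])
  also have "\<dots> \<le> \<delta> * 3"
    using pe \<open>\<bar>p + e\<bar> \<le> 3\<close> by (intro mult_mono) auto
  finally show ?thesis by (simp add: p_def e_def)
qed

theorem lemma13:
  fixes d r k :: nat and s :: "real poly"
    and \<delta> \<sigma> \<gamma> R b :: real and \<theta> :: int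
  assumes r2: "r \<ge> 2"
  defines "\<delta> \<equiv> real r powr (-7/2)"
      and "\<sigma> \<equiv> sqrt (ln (1 / \<delta>)) / real r"
      and "\<gamma> \<equiv> sqrt (5/2 * ln (real r))"
      and "R \<equiv> 1 + \<gamma> * (2 + sqrt 2) * sqrt (real d) * \<sigma>"
      and "b \<equiv> (R + 1)^2 / (4 * \<sigma>^2)"
      and "\<theta> \<equiv> \<lceil>max (1/2 * b * (exp 1)^2) (ln (2 / \<delta>))\<rceil>"
  assumes deg_s: "degree s = nat \<lceil>sqrt (2 * real_of_int \<theta> * ln (4 / \<delta>))\<rceil>"
      and approx_s: "\<forall>t\<in>{0..b}. \<bar>exp (- t) - poly s t\<bar> \<le> \<delta>"
  shows "sup_norm (\<lambda>x. Kr_op s \<sigma> R (cheb k) x - KG_op \<sigma> R (cheb k) x)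
           \<le> 2 * R * (3 * \<delta> / (sqrt (2 * pi) * \<sigma>)) * Sup ((\<lambda>y. \<bar>cheb k y\<bar>) ` {-R..R})
       \<and> (R \<le> 1 + 1 / (10 * real k ^ 2) \<longrightarrow>
           sup_norm (\<lambda>x. Kr_op s \<sigma> R (cheb k) x - KG_op \<sigma> R (cheb k) x)
             \<le> 24 * \<delta> / (sqrt (2 * pi) * \<sigma>))"
proof -
  have rpos: "real r \<ge> 1" using r2 by simp
  have d0: "0 \<le> \<delta>" unfolding \<delta>_def by simp
  have d1: "\<delta> \<le> 1" unfolding \<delta>_def
    using rpos by (simp add: powr_minus divide_simps ge_one_powr_ge_zero)
  have dpos: "0 < \<delta>" unfolding \<delta>_def using rpos by simp
  have "1 < real r powr (7/2)" using r2 by (intro gr_one_powr) auto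
  then have "\<delta> < 1" unfolding \<delta>_def by (simp add: powr_minus inverse_less_1_iff)
  then have "1 < 1 / \<delta>" using dpos by simp
  then have "0 < ln (1 / \<delta>)" by (rule ln_gt_zero)
  then have spos: "0 < \<sigma>" unfolding \<sigma>_def using rpos by simp
  then have s0: "0 \<le> \<sigma>" by simp
  have g0: "0 \<le> \<gamma>" unfolding \<gamma>_def using rpos by simp
  have R1: "1 \<le> R" unfolding R_def using s0 g0 by simp
  define C where "C = 3 * \<delta> / (sqrt (2 * pi) * \<sigma>)"
  have C0: "0 \<le> C" unfolding C_def using d0 s0 by simp
  define M where "M = Sup ((\<lambda>y. \<bar>cheb k y\<bar>) ` {-R..R})"
  have contc: "continuous_on A (cheb k)" for A
    unfolding cheb_def by (intro continuous_intros)
  have "compact ((\<lambda>y. \<bar>cheb k y\<bar>) ` {-R..R})"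
    by (intro compact_continuous_image continuous_intros contc) simp
  then have bdd: "bdd_above ((\<lambda>y. \<bar>cheb k y\<bar>) ` {-R..R})"
    by (simp add: bounded_imp_bdd_above compact_imp_bounded)
  have Mge: "\<bar>cheb k y\<bar> \<le> M" if "y \<in> {-R..R}" for y
    unfolding M_def using bdd that by (intro cSup_upper) auto
  have M0: "0 \<le> M" using Mge[of 0] R1 by force
  have pt: "\<bar>Kr s \<sigma> x y - KG \<sigma> x y\<bar> \<le> C" if x: "x \<in> {-1..1}" and y: "y \<in> {-R..R}" for x y
  proof -
    define t where "t = (x - y)^2 / (4 * \<sigma>^2)"
    have t0: "0 \<le> t" unfolding t_def by simp
    have "\<bar>x - y\<bar> \<le> R + 1" using x y by auto
    then have "(x - y)^2 \<le> (R + 1)^2"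
      by (metis abs_ge_zero power2_abs power_mono)
    then have tb: "t \<le> b" unfolding t_def b_def by (intro divide_right_mono) auto
    have e: "exp (- ((x - y)^2) / (2 * \<sigma>^2)) = exp (- t)^2"
    proof -
      have "- ((x - y)^2) / (2 * \<sigma>^2) = - t + - t" unfolding t_def
        using spos by (simp add: field_simps)
      then show ?thesis by (simp add: power2_eq_square exp_add[symmetric])
    qed
    have "Kr s \<sigma> x y - KG \<sigma> x y = 1 / (sqrt (2 * pi) * \<sigma>) * ((poly s t)^2 - exp (- t)^2)"
      unfolding Kr_def KG_def e t_def by (simp add: algebra_simps)
    then have "\<bar>Kr s \<sigma> x y - KG \<sigma> x y\<bar> = 1 / (sqrt (2 * pi) * \<sigma>) * \<bar>(poly s t)^2 - exp (- t)^2\<bar>"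
      using s0 by (simp add: abs_mult)
    also have "\<dots> \<le> 1 / (sqrt (2 * pi) * \<sigma>) * (3 * \<delta>)"
      using kern_pt[OF t0 tb approx_s d1] s0 by (intro mult_left_mono) auto
    finally show ?thesis by (simp add: C_def)
  qed
  have main: "\<bar>Kr_op s \<sigma> R (cheb k) x - KG_op \<sigma> R (cheb k) x\<bar> \<le> C * M * (2 * R)"
    if x: "x \<in> {-1..1}" for x
  proof -
    have i1: "(\<lambda>y. Kr s \<sigma> x y * cheb k y) integrable_on {-R..R}"
      unfolding Kr_def using spos
      by (intro integrable_continuous_interval continuous_intros contc) auto
    have i2: "(\<lambda>y. KG \<sigma> x y * cheb k y) integrable_on {-R..R}"
      unfolding KG_def using spos
      by (intro integrable_continuous_interval continuous_intros contc) auto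
    have eq: "Kr_op s \<sigma> R (cheb k) x - KG_op \<sigma> R (cheb k) x
        = integral (cbox (-R) R) (\<lambda>y. (Kr s \<sigma> x y - KG \<sigma> x y) * cheb k y)"
      unfolding Kr_op_def KG_op_def
      using integral_diff[OF i1 i2] by (simp add: algebra_simps)
    have "norm (integral (cbox (-R) R) (\<lambda>y. (Kr s \<sigma> x y - KG \<sigma> x y) * cheb k y))
        \<le> (C * M) * Henstock_Kurzweil_Integration.content (cbox (-R) R)"
    proof (rule integrable_bound)
      show "0 \<le> C * M" using C0 M0 by simp
      show "(\<lambda>y. (Kr s \<sigma> x y - KG \<sigma> x y) * cheb k y) integrable_on cbox (- R) R"
        using integrable_diff[OF i1 i2] by (simp add: algebra_simps)
      fix y assume "y \<in> cbox (-R) R"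
      then have y: "y \<in> {-R..R}" by simp
      show "norm ((Kr s \<sigma> x y - KG \<sigma> x y) * cheb k y) \<le> C * M"
        unfolding real_norm_def abs_mult
        using pt[OF x y] Mge[OF y] C0 by (intro mult_mono) auto
    qed
    moreover have "Henstock_Kurzweil_Integration.content (cbox (-R) R) = 2 * R" using R1 by simp
    ultimately show ?thesis using eq by simp
  qed
  have sn: "sup_norm (\<lambda>x. Kr_op s \<sigma> R (cheb k) x - KG_op \<sigma> R (cheb k) x) \<le> C * M * (2 * R)"
    unfolding sup_norm_def using main by (intro cSup_least) auto
  have part2: "sup_norm (\<lambda>x. Kr_op s \<sigma> R (cheb k) x - KG_op \<sigma> R (cheb k) x)
             \<le> 24 * \<delta> / (sqrt (2 * pi) * \<sigma>)" if hR: "R \<le> 1 + 1 / (10 * real k ^ 2)"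
  proof -
    have M3: "M \<le> 3" unfolding M_def
    proof (rule cSup_least)
      show "(\<lambda>y. \<bar>cheb k y\<bar>) ` {-R..R} \<noteq> {}" using R1 by simp
      fix v assume "v \<in> (\<lambda>y. \<bar>cheb k y\<bar>) ` {-R..R}"
      then obtain y where "y \<in> {-R..R}" "v = \<bar>cheb k y\<bar>" by auto
      then show "v \<le> 3" using cheb_bound3[of y k] hR by auto
    qed
    have R11: "R \<le> 11/10"
    proof (cases "k = 0")
      case True then show ?thesis using hR by simp
    next
      case False
      then have "1 / (10 * real k ^ 2) \<le> 1/10" by (simp add: field_simps)
      then show ?thesis using hR by simp
    qed
    have "C * M * (2 * R) \<le> C * 3 * (2 * (11/10))"
      using C0 M0 M3 R1 R11 by (intro mult_mono) auto
    also have "\<dots> \<le> C * 8" using C0 by simp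
    also have "C * 8 = 24 * \<delta> / (sqrt (2 * pi) * \<sigma>)" by (simp add: C_def)
    finally show ?thesis using sn by linarith
  qed
  have "C * M * (2 * R) = 2 * R * (3 * \<delta> / (sqrt (2 * pi) * \<sigma>)) * Sup ((\<lambda>y. \<bar>cheb k y\<bar>) ` {-R..R})"
    by (simp only: C_def M_def mult_ac)
  then show ?thesis using sn part2 by simp
qed

end
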